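(* Let $\epsilon\ge0$ and let $\mathcal A\in\mathrm{LDP}_\epsilon$. Then \[ \eta_{\mathrm{Tr}}(\mathcal A)\le\frac{e^\epsilon-1}{e^\epsilon+1}. \]
   Context: All Hilbert spaces are finite-dimensional. $E_\gamma(\rho\|\sigma)=\mathrm{Tr}(\rho-\gamma\sigma)_+$. A quantum channel (CPTP map) $\mathcal A$ from operators on $H_A$ to operators on $H_B$ is in $\mathrm{LDP}_\epsilon$ if $E_{e^\epsilon}(\mathcal A(\rho)\|\mathcal A(\sigma))=0$ for all states $\rho,\sigma$ on $H_A$. The trace-distance contraction coefficient is $\eta_{\mathrm{Tr}}(\mathcal A)=\sup_{\rho\ne\sigma}\frac{\|\mathcal A(\rho)-\mathcal A(\sigma)\|_1}{\|\rho-\sigma\|_1}$, the supremum over distinct states on $H_A$. *)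

theory Defs
  imports Complex_Main "HOL-Library.Extended_Real" "Jordan_Normal_Form.Matrix"
begin

definition mtrace :: "complex mat \<Rightarrow> complex" where
  "mtrace A = (\<Sum>i<dim_row A. A $$ (i, i))"

definition adj :: "complex mat \<Rightarrow> complex mat" where
  "adj A = mat (dim_col A) (dim_row A) (\<lambda>(i, j). cnj (A $$ (j, i)))"

definition hermitian :: "complex mat \<Rightarrow> bool" where
  "hermitian A \<longleftrightarrow> A = adj A"

definition psd :: "nat \<Rightarrow> complex mat \<Rightarrow> bool" where
  "psd n A \<longleftrightarrow> A \<in> carrier_mat n n \<and> hermitian A \<and>
     (\<forall>v \<in> carrier_vec n. 0 \<le> Re (conjugate v \<bullet> (A *\<^sub>v v)))"

definition density :: "nat \<Rightarrow> complex mat \<Rightarrow> bool" where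
  "density n \<rho> \<longleftrightarrow> psd n \<rho> \<and> mtrace \<rho> = 1"

definition pos_part :: "nat \<Rightarrow> complex mat \<Rightarrow> complex mat" where
  "pos_part n X = (THE P. psd n P \<and> psd n (P - X) \<and> P * (P - X) = 0\<^sub>m n n)"

definition E_gamma :: "nat \<Rightarrow> real \<Rightarrow> complex mat \<Rightarrow> complex mat \<Rightarrow> real" where
  "E_gamma n \<gamma> \<rho> \<sigma> = Re (mtrace (pos_part n (\<rho> - complex_of_real \<gamma> \<cdot>\<^sub>m \<sigma>)))"

definition msqrt :: "nat \<Rightarrow> complex mat \<Rightarrow> complex mat" where
  "msqrt n P = (THE S. psd n S \<and> S * S = P)"

definition trace_norm :: "nat \<Rightarrow> complex mat \<Rightarrow> real" where
  "trace_norm n X = Re (mtrace (msqrt n (adj X * X)))"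

definition blk :: "nat \<Rightarrow> complex mat \<Rightarrow> nat \<Rightarrow> nat \<Rightarrow> complex mat" where
  "blk n X i j = mat n n (\<lambda>(a, b). X $$ (i * n + a, j * n + b))"

text \<open>The ampliation id_k \<otimes> A acting on (k*n) x (k*n) block matrices, output (k*m) x (k*m).\<close>
definition ampl :: "nat \<Rightarrow> nat \<Rightarrow> nat \<Rightarrow> (complex mat \<Rightarrow> complex mat) \<Rightarrow> complex mat \<Rightarrow> complex mat" where
  "ampl k n m A X = mat (k * m) (k * m)
     (\<lambda>(r, c). A (blk n X (r div m) (c div m)) $$ (r mod m, c mod m))"

definition channel :: "nat \<Rightarrow> nat \<Rightarrow> (complex mat \<Rightarrow> complex mat) \<Rightarrow> bool" where
  "channel n m A \<longleftrightarrow>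
     (\<forall>X \<in> carrier_mat n n. A X \<in> carrier_mat m m) \<and>
     (\<forall>X \<in> carrier_mat n n. \<forall>Y \<in> carrier_mat n n. A (X + Y) = A X + A Y) \<and>
     (\<forall>X \<in> carrier_mat n n. \<forall>c. A (c \<cdot>\<^sub>m X) = c \<cdot>\<^sub>m A X) \<and>
     (\<forall>X \<in> carrier_mat n n. mtrace (A X) = mtrace X) \<and>
     (\<forall>k X. psd (k * n) X \<longrightarrow> psd (k * m) (ampl k n m A X))"

definition LDP :: "nat \<Rightarrow> nat \<Rightarrow> real \<Rightarrow> (complex mat \<Rightarrow> complex mat) \<Rightarrow> bool" where
  "LDP n m \<epsilon> A \<longleftrightarrow> channel n m A \<and>
     (\<forall>\<rho> \<sigma>. density n \<rho> \<longrightarrow> density n \<sigma> \<longrightarrow> E_gamma m (exp \<epsilon>) (A \<rho>) (A \<sigma>) = 0)"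

text \<open>Trace-distance contraction coefficient (supremum in the extended reals; -\<infinity> if no two distinct states).\<close>
definition eta_tr :: "nat \<Rightarrow> nat \<Rightarrow> (complex mat \<Rightarrow> complex mat) \<Rightarrow> ereal" where
  "eta_tr n m A = (SUP p \<in> {(\<rho>, \<sigma>). density n \<rho> \<and> density n \<sigma> \<and> \<rho> \<noteq> \<sigma>}.
      ereal (trace_norm m (A (fst p) - A (snd p)) / trace_norm n (fst p - snd p)))"

end

theory Submission
  imports Defs "Jordan_Normal_Form.Schur_Decomposition" "Jordan_Normal_Form.Spectral_Radius"
begin


lemma mult_idx:
  assumes "A \<in> carrier_mat n k" "B \<in> carrier_mat k m" "i < n" "j < m"
  shows "(A*B)$$(i,j) = (\<Sum>l<k. A$$(i,l) * B$$(l,j))"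
  using assms by (simp add: scalar_prod_def atLeast0LessThan)

lemma mult_vec_idx:
  assumes "A \<in> carrier_mat n k" "v \<in> carrier_vec k" "i < n"
  shows "(A *\<^sub>v v)$i = (\<Sum>l<k. A$$(i,l) * v$l)"
  using assms by (simp add: scalar_prod_def atLeast0LessThan)

lemma cscalar_idx:
  assumes "v \<in> carrier_vec n" "w \<in> carrier_vec n"
  shows "conjugate v \<bullet> w = (\<Sum>l<n. cnj (v$l) * w$l)"
  using assms by (simp add: scalar_prod_def atLeast0LessThan)

lemma adj_carrier[simp]: "A \<in> carrier_mat r c \<Longrightarrow> adj A \<in> carrier_mat c r"
  by (simp add: adj_def)

lemma adj_dims[simp]: "dim_row (adj A) = dim_col A" "dim_col (adj A) = dim_row A"
  by (simp_all add: adj_def)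

lemma adj_idx[simp]: "i < dim_col A \<Longrightarrow> j < dim_row A \<Longrightarrow> adj A $$ (i,j) = cnj (A$$(j,i))"
  by (simp add: adj_def)

lemma adj_adj[simp]: "adj (adj A) = A"
  by (rule eq_matI) auto

lemma adj_mult:
  assumes "A \<in> carrier_mat n k" "B \<in> carrier_mat k m"
  shows "adj (A*B) = adj B * adj A"
proof (rule eq_matI)
  fix i j assume ij: "i < dim_row (adj B * adj A)" "j < dim_col (adj B * adj A)"
  hence i: "i < m" and j: "j < n" using assms by auto
  have "adj (A*B) $$ (i,j) = cnj ((A*B)$$(j,i))" using assms i j by simp
  also have "\<dots> = (\<Sum>l<k. cnj (A$$(j,l)) * cnj (B$$(l,i)))" 
    using mult_idx[OF assms j i] by simp
  also have "\<dots> = (adj B * adj A) $$ (i,j)"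
    by (subst mult_idx[of _ m k _ n]) (use assms i j in \<open>auto simp: mult.commute intro!: sum.cong\<close>)
  finally show "adj (A*B) $$ (i,j) = (adj B * adj A) $$ (i,j)" .
qed (use assms in auto)

lemma adj_add: "A \<in> carrier_mat r c \<Longrightarrow> B \<in> carrier_mat r c \<Longrightarrow> adj (A + B) = adj A + adj B"
  by (rule eq_matI) auto

lemma adj_minus: "A \<in> carrier_mat r c \<Longrightarrow> B \<in> carrier_mat r c \<Longrightarrow> adj (A - B) = adj A - adj B"
  by (rule eq_matI) auto

lemma adj_smult: "adj (a \<cdot>\<^sub>m A) = cnj a \<cdot>\<^sub>m adj A"
  by (rule eq_matI) auto

lemma adj_zero[simp]: "adj (0\<^sub>m r c) = 0\<^sub>m c r"
  by (rule eq_matI) auto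

lemma adj_one[simp]: "adj (1\<^sub>m n) = 1\<^sub>m n"
  by (rule eq_matI) auto

lemma hermitian_idx: "hermitian A \<Longrightarrow> A \<in> carrier_mat n n \<Longrightarrow> i < n \<Longrightarrow> j < n \<Longrightarrow> A$$(i,j) = cnj (A$$(j,i))"
proof -
  assume h: "hermitian A" and c: "A \<in> carrier_mat n n" and i: "i < n" and j: "j < n"
  from h have "A$$(i,j) = adj A $$ (i,j)" unfolding hermitian_def by (rule arg_cong)
  thus ?thesis using c i j by simp
qed

lemma hermitianI: "A \<in> carrier_mat n n \<Longrightarrow> (\<And>i j. i < n \<Longrightarrow> j < n \<Longrightarrow> A$$(i,j) = cnj (A$$(j,i))) \<Longrightarrow> hermitian A"
proof -
  assume c: "A \<in> carrier_mat n n" and h: "\<And>i j. i < n \<Longrightarrow> j < n \<Longrightarrow> A$$(i,j) = cnj (A$$(j,i))"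
  show ?thesis unfolding hermitian_def
  proof (rule eq_matI)
    fix i j assume "i < dim_row (adj A)" "j < dim_col (adj A)"
    hence "i < n" "j < n" using c by auto
    thus "A $$ (i,j) = adj A $$ (i,j)" using c h[of i j] by simp
  qed (use c in auto)
qed

definition unitary :: "nat \<Rightarrow> complex mat \<Rightarrow> bool" where
  "unitary n U \<longleftrightarrow> U \<in> carrier_mat n n \<and> adj U * U = 1\<^sub>m n \<and> U * adj U = 1\<^sub>m n"

lemma unitaryI: assumes "U \<in> carrier_mat n n" "adj U * U = 1\<^sub>m n" shows "unitary n U"
  using assms mat_mult_left_right_inverse[of "adj U" n U] unfolding unitary_def by auto

lemma unitary_col:
  assumes "unitary n U" "i < n" "j < n"
  shows "(\<Sum>k<n. cnj (U$$(k,i)) * U$$(k,j)) = (if i = j then 1 else 0)"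
proof -
  have "(adj U * U)$$(i,j) = (\<Sum>k<n. cnj (U$$(k,i)) * U$$(k,j))"
    using assms by (subst mult_idx[of _ n n _ n]) (auto simp: unitary_def)
  moreover have "(adj U * U)$$(i,j) = (if i = j then 1 else 0)"
    using assms unfolding unitary_def by (simp only:) (simp add: index_one_mat)
  ultimately show ?thesis by simp
qed

lemma unitary_row:
  assumes "unitary n U" "i < n" "j < n"
  shows "(\<Sum>k<n. U$$(i,k) * cnj (U$$(j,k))) = (if i = j then 1 else 0)"
proof -
  have "(U * adj U)$$(i,j) = (\<Sum>k<n. U$$(i,k) * cnj (U$$(j,k)))"
    using assms by (subst mult_idx[of _ n n _ n]) (auto simp: unitary_def)
  moreover have "(U * adj U)$$(i,j) = (if i = j then 1 else 0)"
    using assms unfolding unitary_def by (simp only:) (simp add: index_one_mat)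
  ultimately show ?thesis by simp
qed



definition sp :: "nat \<Rightarrow> complex mat \<Rightarrow> (nat \<Rightarrow> real) \<Rightarrow> complex mat" where
  "sp n U d = mat n n (\<lambda>(i,j). \<Sum>l<n. U$$(i,l) * complex_of_real (d l) * cnj (U$$(j,l)))"

lemma sp_carrier[simp]: "sp n U d \<in> carrier_mat n n"
  by (simp add: sp_def)

lemma sp_dims[simp]: "dim_row (sp n U d) = n" "dim_col (sp n U d) = n"
  by (simp_all add: sp_def)

lemma sp_idx: "i < n \<Longrightarrow> j < n \<Longrightarrow> sp n U d $$ (i,j) = (\<Sum>l<n. U$$(i,l) * complex_of_real (d l) * cnj (U$$(j,l)))"
  by (simp add: sp_def)
lemma sp_hermitian: "hermitian (sp n U d)"
proof (rule hermitianI[of _ n])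
  fix i j assume "i < n" "j < n"
  thus "sp n U d $$ (i, j) = cnj (sp n U d $$ (j, i))"
    by (simp add: sp_idx cnj_sum mult.commute mult.left_commute)
qed simp
lemma sp_add: "sp n U a + sp n U b = sp n U (\<lambda>l. a l + b l)"
proof (rule eq_matI)
  fix i j assume "i < dim_row (sp n U (\<lambda>l. a l + b l))" "j < dim_col (sp n U (\<lambda>l. a l + b l))"
  hence ij: "i < n" "j < n" by auto
  have "(sp n U a + sp n U b) $$ (i,j) = sp n U a $$ (i,j) + sp n U b $$ (i,j)" using ij by simp
  also have "\<dots> = (\<Sum>l<n. U$$(i,l) * complex_of_real (a l) * cnj (U$$(j,l)) + U$$(i,l) * complex_of_real (b l) * cnj (U$$(j,l)))"
    using ij by (simp only: sp_idx sum.distrib)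
  also have "\<dots> = sp n U (\<lambda>l. a l + b l) $$ (i,j)"
    using ij by (simp only: sp_idx) (rule sum.cong, simp_all add: algebra_simps)
  finally show "(sp n U a + sp n U b) $$ (i,j) = sp n U (\<lambda>l. a l + b l) $$ (i,j)" .
qed simp_all

lemma sp_minus: "sp n U a - sp n U b = sp n U (\<lambda>l. a l - b l)"
proof (rule eq_matI)
  fix i j assume "i < dim_row (sp n U (\<lambda>l. a l - b l))" "j < dim_col (sp n U (\<lambda>l. a l - b l))"
  hence ij: "i < n" "j < n" by auto
  have "(sp n U a - sp n U b) $$ (i,j) = sp n U a $$ (i,j) - sp n U b $$ (i,j)" using ij by simp
  also have "\<dots> = (\<Sum>l<n. U$$(i,l) * complex_of_real (a l) * cnj (U$$(j,l)) - U$$(i,l) * complex_of_real (b l) * cnj (U$$(j,l)))"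
    using ij by (simp only: sp_idx sum_subtractf)
  also have "\<dots> = sp n U (\<lambda>l. a l - b l) $$ (i,j)"
    using ij by (simp only: sp_idx) (rule sum.cong, simp_all add: algebra_simps)
  finally show "(sp n U a - sp n U b) $$ (i,j) = sp n U (\<lambda>l. a l - b l) $$ (i,j)" .
qed simp_all

lemma sp_smult: "complex_of_real c \<cdot>\<^sub>m sp n U a = sp n U (\<lambda>l. c * a l)"
proof (rule eq_matI)
  fix i j assume "i < dim_row (sp n U (\<lambda>l. c * a l))" "j < dim_col (sp n U (\<lambda>l. c * a l))"
  hence ij: "i < n" "j < n" by auto
  have "(complex_of_real c \<cdot>\<^sub>m sp n U a) $$ (i,j) = complex_of_real c * sp n U a $$ (i,j)" using ij by simp
  also have "\<dots> = (\<Sum>l<n. complex_of_real c * (U$$(i,l) * complex_of_real (a l) * cnj (U$$(j,l))))"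
    using ij by (simp only: sp_idx sum_distrib_left)
  also have "\<dots> = sp n U (\<lambda>l. c * a l) $$ (i,j)"
    using ij by (simp only: sp_idx) (rule sum.cong, simp_all add: algebra_simps)
  finally show "(complex_of_real c \<cdot>\<^sub>m sp n U a) $$ (i,j) = sp n U (\<lambda>l. c * a l) $$ (i,j)" .
qed simp_all

lemma sp_zero: "sp n U (\<lambda>l. 0) = 0\<^sub>m n n"
  by (rule eq_matI) (simp_all add: sp_idx)

lemma sp_one: assumes "unitary n U" shows "sp n U (\<lambda>l. 1) = 1\<^sub>m n"
proof (rule eq_matI)
  fix i j assume "i < dim_row (1\<^sub>m n)" "j < dim_col (1\<^sub>m n)"
  hence ij: "i < n" "j < n" by auto
  have "sp n U (\<lambda>l. 1) $$ (i,j) = (\<Sum>l<n. U$$(i,l) * cnj (U$$(j,l)))"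
    using ij by (simp add: sp_idx)
  also have "\<dots> = 1\<^sub>m n $$ (i,j)" using unitary_row[OF assms ij] ij by simp
  finally show "sp n U (\<lambda>l. 1) $$ (i,j) = 1\<^sub>m n $$ (i,j)" .
qed simp_all

lemma sum3_swap: "(\<Sum>k<n. \<Sum>l<n. \<Sum>m<n. F k l m) = (\<Sum>l<n. \<Sum>m<n. \<Sum>k<(n::nat). (F k l m :: complex))"
proof -
  have "(\<Sum>k<n. \<Sum>l<n. \<Sum>m<n. F k l m) = (\<Sum>l<n. \<Sum>k<n. \<Sum>m<n. F k l m)"
    by (rule sum.swap)
  also have "\<dots> = (\<Sum>l<n. \<Sum>m<n. \<Sum>k<n. F k l m)"
    by (rule sum.cong[OF refl], rule sum.swap)
  finally show ?thesis .
qed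

lemma sum_delta_if: "l < n \<Longrightarrow> (\<Sum>m<(n::nat). f m * (if l = m then 1 else 0)) = (f l :: complex)"
proof -
  assume l: "l < n"
  have "(\<Sum>m<n. f m * (if l = m then 1 else 0)) = (\<Sum>m<n. if l = m then f m else 0)"
    by (rule sum.cong) auto
  also have "\<dots> = f l" using l by (simp add: sum.delta)
  finally show ?thesis .
qed

lemma sp_mult: assumes U: "unitary n U"
  shows "sp n U a * sp n U b = sp n U (\<lambda>l. a l * b l)"
proof (rule eq_matI)
  fix i j assume "i < dim_row (sp n U (\<lambda>l. a l * b l))" "j < dim_col (sp n U (\<lambda>l. a l * b l))"
  hence ij: "i < n" "j < n" by auto
  have "(sp n U a * sp n U b) $$ (i,j) = (\<Sum>k<n. sp n U a $$ (i,k) * sp n U b $$ (k,j))"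
    using ij by (rule mult_idx[OF sp_carrier sp_carrier])
  also have "\<dots> = (\<Sum>k<n. (\<Sum>l<n. U$$(i,l) * complex_of_real (a l) * cnj (U$$(k,l))) * (\<Sum>m<n. U$$(k,m) * complex_of_real (b m) * cnj (U$$(j,m))))"
    using ij by (intro sum.cong refl) (simp add: sp_idx)
  also have "\<dots> = (\<Sum>k<n. \<Sum>l<n. \<Sum>m<n. (U$$(i,l) * complex_of_real (a l) * cnj (U$$(k,l))) * (U$$(k,m) * complex_of_real (b m) * cnj (U$$(j,m))))"
    by (simp only: sum_product)
  also have "\<dots> = (\<Sum>l<n. \<Sum>m<n. \<Sum>k<n. (U$$(i,l) * complex_of_real (a l) * cnj (U$$(k,l))) * (U$$(k,m) * complex_of_real (b m) * cnj (U$$(j,m))))"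
    by (rule sum3_swap)
  also have "\<dots> = (\<Sum>l<n. \<Sum>m<n. (U$$(i,l) * complex_of_real (a l) * complex_of_real (b m) * cnj (U$$(j,m))) * (\<Sum>k<n. cnj (U$$(k,l)) * U$$(k,m)))"
    by (intro sum.cong refl) (simp add: sum_distrib_left algebra_simps)
  also have "\<dots> = (\<Sum>l<n. \<Sum>m<n. (U$$(i,l) * complex_of_real (a l) * complex_of_real (b m) * cnj (U$$(j,m))) * (if l = m then 1 else 0))"
    by (intro sum.cong refl) (simp add: unitary_col[OF U])
  also have "\<dots> = (\<Sum>l<n. U$$(i,l) * complex_of_real (a l) * complex_of_real (b l) * cnj (U$$(j,l)))"
    by (intro sum.cong refl) (rule sum_delta_if, simp)
  also have "\<dots> = sp n U (\<lambda>l. a l * b l) $$ (i,j)"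
    using ij by (simp add: sp_idx algebra_simps)
  finally show "(sp n U a * sp n U b) $$ (i,j) = sp n U (\<lambda>l. a l * b l) $$ (i,j)" .
qed simp_all


lemma sum3_rev: "(\<Sum>a<n. \<Sum>b<n. \<Sum>c<n. F a b c) = (\<Sum>c<n. \<Sum>b<n. \<Sum>a<(n::nat). (F a b c :: complex))"
proof -
  have "(\<Sum>a<n. \<Sum>b<n. \<Sum>c<n. F a b c) = (\<Sum>a<n. \<Sum>c<n. \<Sum>b<n. F a b c)"
    by (rule sum.cong[OF refl], rule sum.swap)
  also have "\<dots> = (\<Sum>c<n. \<Sum>a<n. \<Sum>b<n. F a b c)" by (rule sum.swap)
  also have "\<dots> = (\<Sum>c<n. \<Sum>b<n. \<Sum>a<n. F a b c)"
    by (rule sum.cong[OF refl], rule sum.swap)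
  finally show ?thesis .
qed

lemma sp_conj: assumes W: "W \<in> carrier_mat n n" and U: "U \<in> carrier_mat n n"
  shows "W * sp n U d * adj W = sp n (W * U) d"
proof (rule eq_matI)
  fix i j assume "i < dim_row (sp n (W * U) d)" "j < dim_col (sp n (W * U) d)"
  hence ij: "i < n" "j < n" by auto
  have WS: "W * sp n U d \<in> carrier_mat n n" using W by simp
  have "(W * sp n U d * adj W) $$ (i,j) = (\<Sum>b<n. (W * sp n U d) $$ (i,b) * adj W $$ (b,j))"
    using ij by (rule mult_idx[OF WS adj_carrier[OF W]])
  also have "\<dots> = (\<Sum>b<n. (\<Sum>a<n. W$$(i,a) * (\<Sum>l<n. U$$(a,l) * complex_of_real (d l) * cnj (U$$(b,l)))) * cnj (W$$(j,b)))"
  proof (rule sum.cong[OF refl])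
    fix b assume "b \<in> {..<n}"
    hence b: "b < n" by simp
    have "(W * sp n U d) $$ (i,b) = (\<Sum>a<n. W$$(i,a) * sp n U d $$ (a,b))"
      by (rule mult_idx[OF W sp_carrier ij(1) b])
    also have "\<dots> = (\<Sum>a<n. W$$(i,a) * (\<Sum>l<n. U$$(a,l) * complex_of_real (d l) * cnj (U$$(b,l))))"
      using b by (intro sum.cong refl) (simp add: sp_idx)
    finally show "(W * sp n U d) $$ (i,b) * adj W $$ (b,j) = (\<Sum>a<n. W$$(i,a) * (\<Sum>l<n. U$$(a,l) * complex_of_real (d l) * cnj (U$$(b,l)))) * cnj (W$$(j,b))"
      using W b ij by simp
  qed
  also have "\<dots> = (\<Sum>b<n. \<Sum>a<n. \<Sum>l<n. W$$(i,a) * U$$(a,l) * complex_of_real (d l) * cnj (U$$(b,l)) * cnj (W$$(j,b)))"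
    by (simp add: sum_distrib_left sum_distrib_right algebra_simps)
  also have "\<dots> = (\<Sum>l<n. \<Sum>a<n. \<Sum>b<n. W$$(i,a) * U$$(a,l) * complex_of_real (d l) * cnj (U$$(b,l)) * cnj (W$$(j,b)))"
    by (rule sum3_rev)
  also have "\<dots> = (\<Sum>l<n. (\<Sum>a<n. W$$(i,a) * U$$(a,l)) * complex_of_real (d l) * cnj (\<Sum>b<n. W$$(j,b) * U$$(b,l)))"
    by (simp add: sum_distrib_left sum_distrib_right cnj_sum algebra_simps)
  also have "\<dots> = sp n (W * U) d $$ (i,j)"
    using ij by (simp add: sp_idx mult_idx[OF W U])
  finally show "(W * sp n U d * adj W) $$ (i,j) = sp n (W * U) d $$ (i,j)" .
qed (use W in simp_all)

lemma mtrace_idx: "A \<in> carrier_mat n n \<Longrightarrow> mtrace A = (\<Sum>i<n. A$$(i,i))"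
  by (simp add: mtrace_def)

lemma sp_trace: assumes U: "unitary n U"
  shows "mtrace (sp n U d) = (\<Sum>l<n. complex_of_real (d l))"
proof -
  have "mtrace (sp n U d) = (\<Sum>i<n. \<Sum>l<n. U$$(i,l) * complex_of_real (d l) * cnj (U$$(i,l)))"
    by (simp add: mtrace_def sp_idx)
  also have "\<dots> = (\<Sum>l<n. \<Sum>i<n. U$$(i,l) * complex_of_real (d l) * cnj (U$$(i,l)))"
    by (rule sum.swap)
  also have "\<dots> = (\<Sum>l<n. complex_of_real (d l) * (\<Sum>i<n. cnj (U$$(i,l)) * U$$(i,l)))"
    by (simp add: sum_distrib_left algebra_simps)
  also have "\<dots> = (\<Sum>l<n. complex_of_real (d l))"
    by (intro sum.cong refl) (simp add: unitary_col[OF U])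
  finally show ?thesis .
qed

definition qf :: "complex mat \<Rightarrow> complex vec \<Rightarrow> complex" where
  "qf A v = conjugate v \<bullet> (A *\<^sub>v v)"

lemma qf_idx: assumes "A \<in> carrier_mat n n" "v \<in> carrier_vec n"
  shows "qf A v = (\<Sum>i<n. cnj (v$i) * (\<Sum>j<n. A$$(i,j) * v$j))"
proof -
  have "qf A v = (\<Sum>i<n. cnj (v$i) * (A *\<^sub>v v)$i)"
    unfolding qf_def using assms by (simp add: cscalar_idx)
  also have "\<dots> = (\<Sum>i<n. cnj (v$i) * (\<Sum>j<n. A$$(i,j) * v$j))"
    by (intro sum.cong refl) (simp only: mult_vec_idx[OF assms] lessThan_iff)
  finally show ?thesis .
qed

lemma sp_qf: assumes U: "U \<in> carrier_mat n n" and v: "v \<in> carrier_vec n"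
  shows "qf (sp n U d) v = (\<Sum>l<n. complex_of_real (d l) * (cnj (\<Sum>j<n. cnj (U$$(j,l)) * v$j) * (\<Sum>j<n. cnj (U$$(j,l)) * v$j)))"
proof -
  have "qf (sp n U d) v = (\<Sum>i<n. cnj (v$i) * (\<Sum>j<n. (\<Sum>l<n. U$$(i,l) * complex_of_real (d l) * cnj (U$$(j,l))) * v$j))"
    using v by (simp add: qf_idx[OF sp_carrier v] sp_idx)
  also have "\<dots> = (\<Sum>i<n. \<Sum>j<n. \<Sum>l<n. cnj (v$i) * U$$(i,l) * complex_of_real (d l) * cnj (U$$(j,l)) * v$j)"
    by (simp add: sum_distrib_left sum_distrib_right algebra_simps)
  also have "\<dots> = (\<Sum>l<n. \<Sum>i<n. \<Sum>j<n. cnj (v$i) * U$$(i,l) * complex_of_real (d l) * cnj (U$$(j,l)) * v$j)"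
    by (rule sum3_swap[symmetric])
  also have "\<dots> = (\<Sum>l<n. complex_of_real (d l) * (cnj (\<Sum>j<n. cnj (U$$(j,l)) * v$j) * (\<Sum>j<n. cnj (U$$(j,l)) * v$j)))"
  proof (rule sum.cong[OF refl])
    fix l
    have "cnj (\<Sum>j<n. cnj (U$$(j,l)) * v$j) * (\<Sum>j<n. cnj (U$$(j,l)) * v$j)
       = (\<Sum>i<n. cnj (v$i) * U$$(i,l)) * (\<Sum>j<n. cnj (U$$(j,l)) * v$j)"
      by (simp add: cnj_sum mult.commute)
    also have "\<dots> = (\<Sum>i<n. \<Sum>j<n. (cnj (v$i) * U$$(i,l)) * (cnj (U$$(j,l)) * v$j))"
      by (rule sum_product)
    finally show "(\<Sum>i<n. \<Sum>j<n. cnj (v$i) * U$$(i,l) * complex_of_real (d l) * cnj (U$$(j,l)) * v$j)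
      = complex_of_real (d l) * (cnj (\<Sum>j<n. cnj (U$$(j,l)) * v$j) * (\<Sum>j<n. cnj (U$$(j,l)) * v$j))"
      by (simp add: sum_distrib_left algebra_simps)
  qed
  finally show ?thesis .
qed


lemma qf_add: assumes "A \<in> carrier_mat n n" "B \<in> carrier_mat n n" "v \<in> carrier_vec n"
  shows "qf (A + B) v = qf A v + qf B v"
  unfolding qf_def using assms
  by (simp add: add_mult_distrib_mat_vec[OF assms] scalar_prod_add_distrib[of _ n])

lemma qf_minus: assumes "A \<in> carrier_mat n n" "B \<in> carrier_mat n n" "v \<in> carrier_vec n"
  shows "qf (A - B) v = qf A v - qf B v"
  unfolding qf_def using assms
  by (simp add: minus_mult_distrib_mat_vec[OF assms] scalar_prod_minus_distrib[of _ n])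

lemma qf_mult_eig: assumes A: "A \<in> carrier_mat n n" and H: "H \<in> carrier_mat n n" and v: "v \<in> carrier_vec n"
  and e: "H *\<^sub>v v = c \<cdot>\<^sub>v v"
  shows "qf (A * H) v = c * qf A v"
proof -
  have "(A * H) *\<^sub>v v = A *\<^sub>v (H *\<^sub>v v)" using A H v by simp
  also have "\<dots> = c \<cdot>\<^sub>v (A *\<^sub>v v)" unfolding e by (rule mult_mat_vec[OF A v])
  finally show ?thesis unfolding qf_def using A v by simp
qed

lemma qf_adj: assumes M: "M \<in> carrier_mat n n" and v: "v \<in> carrier_vec n"
  shows "qf (adj M) v = cnj (qf M v)"
proof -
  have "qf (adj M) v = (\<Sum>i<n. cnj (v$i) * (\<Sum>j<n. adj M $$ (i,j) * v$j))"
    by (rule qf_idx[OF adj_carrier[OF M] v])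
  also have "\<dots> = (\<Sum>i<n. \<Sum>j<n. cnj (v$i) * cnj (M$$(j,i)) * v$j)"
    using M by (intro sum.cong refl) (simp add: sum_distrib_left algebra_simps)
  also have "\<dots> = (\<Sum>j<n. \<Sum>i<n. cnj (v$i) * cnj (M$$(j,i)) * v$j)"
    by (rule sum.swap)
  also have "\<dots> = cnj (\<Sum>j<n. cnj (v$j) * (\<Sum>i<n. M$$(j,i) * v$i))"
    by (simp add: cnj_sum sum_distrib_left algebra_simps)
  also have "\<dots> = cnj (qf M v)" using qf_idx[OF M v] by simp
  finally show ?thesis .
qed

lemma hermitian_qf_real: assumes M: "M \<in> carrier_mat n n" "hermitian M" and v: "v \<in> carrier_vec n"
  shows "qf M v = complex_of_real (Re (qf M v))"
proof -
  have "qf M v = qf (adj M) v" using M(2) unfolding hermitian_def by simp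
  also have "\<dots> = cnj (qf M v)" by (rule qf_adj[OF M(1) v])
  finally have "Im (qf M v) = 0" by (metis cnj.simps(2) neg_equal_zero)
  thus ?thesis by (simp add: complex_eq_iff)
qed

lemma sp_col: assumes U: "unitary n U" and k: "k < n"
  shows "sp n U d *\<^sub>v col U k = complex_of_real (d k) \<cdot>\<^sub>v col U k"
proof -
  have Uc: "U \<in> carrier_mat n n" using U by (simp add: unitary_def)
  show ?thesis
  proof (rule eq_vecI)
    fix i assume "i < dim_vec (complex_of_real (d k) \<cdot>\<^sub>v col U k)"
    hence i: "i < n" using Uc by simp
    have "(sp n U d *\<^sub>v col U k) $ i = (\<Sum>j<n. sp n U d $$ (i,j) * col U k $ j)"
      by (rule mult_vec_idx[OF sp_carrier col_carrier_vec[OF k Uc] i])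
    also have "\<dots> = (\<Sum>j<n. \<Sum>l<n. U$$(i,l) * complex_of_real (d l) * cnj (U$$(j,l)) * U$$(j,k))"
      using i Uc k by (intro sum.cong refl) (simp add: sp_idx sum_distrib_right)
    also have "\<dots> = (\<Sum>l<n. \<Sum>j<n. U$$(i,l) * complex_of_real (d l) * cnj (U$$(j,l)) * U$$(j,k))"
      by (rule sum.swap)
    also have "\<dots> = (\<Sum>l<n. (U$$(i,l) * complex_of_real (d l)) * (\<Sum>j<n. cnj (U$$(j,l)) * U$$(j,k)))"
      by (simp add: sum_distrib_left algebra_simps)
    also have "\<dots> = (\<Sum>l<n. (U$$(i,l) * complex_of_real (d l)) * (if l = k then 1 else 0))"
      using k by (intro sum.cong refl) (simp add: unitary_col[OF U])
    also have "\<dots> = U$$(i,k) * complex_of_real (d k)"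
    proof -
      have "(\<Sum>l<n. (U$$(i,l) * complex_of_real (d l)) * (if l = k then 1 else 0)) = (\<Sum>l<n. if l = k then U$$(i,l) * complex_of_real (d l) else 0)"
        by (rule sum.cong) auto
      thus ?thesis using k by (simp add: sum.delta)
    qed
    also have "\<dots> = (complex_of_real (d k) \<cdot>\<^sub>v col U k) $ i" using i k Uc by simp
    finally show "(sp n U d *\<^sub>v col U k) $ i = (complex_of_real (d k) \<cdot>\<^sub>v col U k) $ i" .
  qed (use Uc in simp)
qed

lemma sp_qf_col: assumes U: "unitary n U" and k: "k < n"
  shows "qf (sp n U d) (col U k) = complex_of_real (d k)"
proof -
  have Uc: "U \<in> carrier_mat n n" using U by (simp add: unitary_def)
  have ck: "col U k \<in> carrier_vec n" using k Uc by simp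
  have "qf (sp n U d) (col U k) = conjugate (col U k) \<bullet> (complex_of_real (d k) \<cdot>\<^sub>v col U k)"
    unfolding qf_def sp_col[OF U k] ..
  also have "\<dots> = complex_of_real (d k) * (conjugate (col U k) \<bullet> col U k)"
    using ck by simp
  also have "conjugate (col U k) \<bullet> col U k = (\<Sum>j<n. cnj (U$$(j,k)) * U$$(j,k))"
    using Uc k by (subst cscalar_idx[OF ck ck]) (intro sum.cong refl, simp)
  also have "\<dots> = 1" using unitary_col[OF U k k] by simp
  finally show ?thesis by simp
qed

lemma wtrace: assumes U: "U \<in> carrier_mat n n" and M: "M \<in> carrier_mat n n"
  shows "mtrace (sp n U e * M) = (\<Sum>l<n. complex_of_real (e l) * qf M (col U l))"
proof -
  have "mtrace (sp n U e * M) = (\<Sum>i<n. (sp n U e * M) $$ (i,i))"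
    using M by (simp add: mtrace_def)
  also have "\<dots> = (\<Sum>i<n. \<Sum>j<n. \<Sum>l<n. U$$(i,l) * complex_of_real (e l) * cnj (U$$(j,l)) * M$$(j,i))"
  proof (rule sum.cong[OF refl])
    fix i assume "i \<in> {..<n}" hence i: "i < n" by simp
    have "(sp n U e * M) $$ (i,i) = (\<Sum>j<n. sp n U e $$ (i,j) * M$$(j,i))"
      by (rule mult_idx[OF sp_carrier M i i])
    also have "\<dots> = (\<Sum>j<n. \<Sum>l<n. U$$(i,l) * complex_of_real (e l) * cnj (U$$(j,l)) * M$$(j,i))"
      using i by (intro sum.cong refl) (simp add: sp_idx sum_distrib_right)
    finally show "(sp n U e * M) $$ (i,i) = (\<Sum>j<n. \<Sum>l<n. U$$(i,l) * complex_of_real (e l) * cnj (U$$(j,l)) * M$$(j,i))" .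
  qed
  also have "\<dots> = (\<Sum>l<n. \<Sum>j<n. \<Sum>i<n. U$$(i,l) * complex_of_real (e l) * cnj (U$$(j,l)) * M$$(j,i))"
    by (rule sum3_rev)
  also have "\<dots> = (\<Sum>l<n. complex_of_real (e l) * qf M (col U l))"
  proof (rule sum.cong[OF refl])
    fix l assume "l \<in> {..<n}" hence l: "l < n" by simp
    have cl: "col U l \<in> carrier_vec n" using l U by simp
    have "qf M (col U l) = (\<Sum>j<n. cnj (col U l $ j) * (\<Sum>i<n. M$$(j,i) * col U l $ i))"
      by (rule qf_idx[OF M cl])
    also have "\<dots> = (\<Sum>j<n. cnj (U$$(j,l)) * (\<Sum>i<n. M$$(j,i) * U$$(i,l)))"
      using U l by (intro sum.cong refl) simp_all
    finally show "(\<Sum>j<n. \<Sum>i<n. U$$(i,l) * complex_of_real (e l) * cnj (U$$(j,l)) * M$$(j,i)) = complex_of_real (e l) * qf M (col U l)"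
      by (simp add: sum_distrib_left algebra_simps)
  qed
  finally show ?thesis .
qed




lemma cscal_idx: assumes "v \<in> carrier_vec n" "w \<in> carrier_vec n"
  shows "v \<bullet>c w = (\<Sum>l<n. v$l * cnj (w$l))"
  using assms by (simp add: scalar_prod_def atLeast0LessThan)

lemma exists_unitary_col0:
  assumes v: "v \<in> carrier_vec n" and v0: "v \<noteq> 0\<^sub>v n"
  shows "\<exists>W c. unitary n W \<and> col W 0 = c \<cdot>\<^sub>v v"
proof -
  interpret cof_vec_space n "TYPE(complex)" .
  define b where "b = basis_completion v"
  note bc = basis_completion[OF v v0, folded b_def]
  obtain vs where bv: "b = v # vs" unfolding b_def basis_completion_def Let_def by auto
  define ws where "ws = gram_schmidt n b"
  note gs = gram_schmidt_result[OF bc(2) bc(4) bc(5) ws_def]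
  have lws: "length ws = n" using gs(4) bc(6) by simp
  have wsc: "\<And>j. j < n \<Longrightarrow> ws!j \<in> carrier_vec n" using gs(3) lws by auto
  have n0: "0 < n"
  proof (rule ccontr)
    assume "\<not> 0 < n" hence "n = 0" by simp
    hence "v = 0\<^sub>v n" using v by auto
    thus False using v0 by simp
  qed
  have hd: "ws!0 = v" using gram_schmidt_hd[OF v, of vs] bv ws_def lws n0
    by (metis hd_conv_nth list.size(3) not_less_zero)
  define s where "s j = 1 / sqrt (Re (ws!j \<bullet>c ws!j))" for j
  define W where "W = mat n n (\<lambda>(i,j). complex_of_real (s j) * ws!j $ i)"
  have Wc: "W \<in> carrier_mat n n" by (simp add: W_def)
  have Wi: "\<And>i j. i < n \<Longrightarrow> j < n \<Longrightarrow> W$$(i,j) = complex_of_real (s j) * ws!j $ i"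
    by (simp add: W_def)
  have nsq: "ws!j \<bullet>c ws!j = complex_of_real (Re (ws!j \<bullet>c ws!j)) \<and> Re (ws!j \<bullet>c ws!j) > 0" if j: "j < n" for j
  proof -
    have wj: "ws!j \<in> carrier_vec n" using wsc j .
    have "ws!j \<bullet>c ws!j = (\<Sum>l<n. ws!j$l * cnj (ws!j$l))" by (rule cscal_idx[OF wj wj])
    also have "\<dots> = (\<Sum>l<n. complex_of_real ((cmod (ws!j$l))^2))"
      by (intro sum.cong refl) (simp only: complex_norm_square[symmetric])
    finally have e: "ws!j \<bullet>c ws!j = complex_of_real (\<Sum>l<n. (cmod (ws!j$l))^2)" by simp
    have ne: "ws!j \<bullet>c ws!j \<noteq> 0" using corthogonalD[OF gs(2), of j j] j lws by simp
    have "(\<Sum>l<n. (cmod (ws!j$l))^2) \<ge> 0" by (intro sum_nonneg) simp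
    moreover have "(\<Sum>l<n. (cmod (ws!j$l))^2) \<noteq> 0"
    proof
      assume "(\<Sum>l<n. (cmod (ws!j$l))^2) = 0"
      hence "ws!j \<bullet>c ws!j = 0" using e by simp
      thus False using ne by simp
    qed
    ultimately show ?thesis using e by simp
  qed
  have orth: "(\<Sum>l<n. cnj (W$$(l,a)) * W$$(l,b)) = (if a = b then 1 else 0)" if a: "a < n" and b: "b < n" for a b
  proof -
    have "(\<Sum>l<n. cnj (W$$(l,a)) * W$$(l,b)) = (\<Sum>l<n. complex_of_real (s a * s b) * (ws!b$l * cnj (ws!a$l)))"
      using a b by (intro sum.cong refl) (simp add: Wi)
    also have "\<dots> = complex_of_real (s a * s b) * (ws!b \<bullet>c ws!a)"
      by (simp add: cscal_idx[OF wsc[OF b] wsc[OF a]] sum_distrib_left)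
    also have "\<dots> = (if a = b then 1 else 0)"
    proof (cases "a = b")
      case True
      have p: "Re (ws!a \<bullet>c ws!a) > 0" using nsq[OF a] by simp
      have "complex_of_real (s a * s a) * (ws!a \<bullet>c ws!a) = complex_of_real (s a * s a * Re (ws!a \<bullet>c ws!a))"
        using nsq[OF a] by (metis of_real_mult)
      also have "s a * s a * Re (ws!a \<bullet>c ws!a) = 1" using p unfolding s_def
        by (simp add: field_simps)
      finally show ?thesis using True by simp
    next
      case False
      hence "ws!b \<bullet>c ws!a = 0" using corthogonalD[OF gs(2), of b a] a b lws by simp
      thus ?thesis using False by simp
    qed
    finally show ?thesis .
  qed
  have "adj W * W = 1\<^sub>m n"
  proof (rule eq_matI)
    fix i j assume "i < dim_row (1\<^sub>m n)" "j < dim_col (1\<^sub>m n)"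
    hence ij: "i < n" "j < n" by auto
    have "(adj W * W) $$ (i,j) = (\<Sum>l<n. adj W $$ (i,l) * W$$(l,j))"
      by (rule mult_idx[OF adj_carrier[OF Wc] Wc ij])
    also have "\<dots> = (\<Sum>l<n. cnj (W$$(l,i)) * W$$(l,j))"
      using ij Wc by (intro sum.cong refl) simp
    also have "\<dots> = 1\<^sub>m n $$ (i,j)" using orth[OF ij] ij by simp
    finally show "(adj W * W) $$ (i,j) = 1\<^sub>m n $$ (i,j)" .
  qed (use Wc in simp_all)
  hence U: "unitary n W" by (rule unitaryI[OF Wc])
  have "col W 0 = complex_of_real (s 0) \<cdot>\<^sub>v v"
  proof (rule eq_vecI)
    fix i assume "i < dim_vec (complex_of_real (s 0) \<cdot>\<^sub>v v)"
    hence i: "i < n" using v by simp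
    show "col W 0 $ i = (complex_of_real (s 0) \<cdot>\<^sub>v v) $ i"
      using i n0 Wc v hd by (simp add: Wi)
  qed (use Wc v in simp)
  with U show ?thesis by blast
qed


lemma unitary_carrier: "unitary n U \<Longrightarrow> U \<in> carrier_mat n n"
  by (simp add: unitary_def)

lemma unitary_mult: assumes "unitary n U" "unitary n V" shows "unitary n (U * V)"
proof -
  have U: "U \<in> carrier_mat n n" and V: "V \<in> carrier_mat n n" using assms by (auto simp: unitary_def)
  have aU: "adj U \<in> carrier_mat n n" and aV: "adj V \<in> carrier_mat n n" using U V by auto
  have "adj (U * V) * (U * V) = adj V * (adj U * (U * V))"
    using assoc_mult_mat[OF aV aU mult_carrier_mat[OF U V]] adj_mult[OF U V] by simp
  also have "adj U * (U * V) = (adj U * U) * V" by (rule assoc_mult_mat[symmetric, OF aU U V])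
  also have "\<dots> = V" using assms V by (simp add: unitary_def)
  also have "adj V * V = 1\<^sub>m n" using assms by (simp add: unitary_def)
  finally show ?thesis using U V by (intro unitaryI) auto
qed

lemma spectral:
  assumes "A \<in> carrier_mat n n" "hermitian A"
  shows "\<exists>U d. unitary n U \<and> A = sp n U d"
  using assms
proof (induction n arbitrary: A)
  case 0
  have "unitary 0 (1\<^sub>m 0)" by (rule unitaryI) auto
  moreover have "A = sp 0 (1\<^sub>m 0) (\<lambda>_. 0)" using 0 by (intro eq_matI) auto
  ultimately show ?case by blast
next
  case (Suc k)
  define n where "n = Suc k"
  have A: "A \<in> carrier_mat n n" and hA: "hermitian A" using Suc n_def by auto
  have "spectrum A \<noteq> {}" using spectrum_non_empty[OF A] n_def by simp
  then obtain e where "eigenvalue A e" unfolding spectrum_def by auto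
  then obtain v where v: "v \<in> carrier_vec n" and v0: "v \<noteq> 0\<^sub>v n" and ev: "A *\<^sub>v v = e \<cdot>\<^sub>v v"
    unfolding eigenvalue_def eigenvector_def using A by auto
  obtain W c where W: "unitary n W" and W0: "col W 0 = c \<cdot>\<^sub>v v"
    using exists_unitary_col0[OF v v0] by blast
  have Wc: "W \<in> carrier_mat n n" using W by (simp add: unitary_def)
  define A' where "A' = adj W * A * W"
  have A'c: "A' \<in> carrier_mat n n" unfolding A'_def using A Wc adj_carrier[OF Wc] by (meson mult_carrier_mat)
  have hA': "hermitian A'"
  proof -
    have "adj A' = adj W * adj A * adj (adj W)"
      unfolding A'_def using A Wc
      by (simp add: adj_mult[of _ n n _ n] assoc_mult_mat[of _ n n _ n _ n])
    also have "\<dots> = A'" using hA unfolding hermitian_def A'_def by simp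
    finally show ?thesis unfolding hermitian_def by simp
  qed
  have n0: "0 < n" using n_def by simp
  have AW0: "(A * W) $$ (a, 0) = e * W $$ (a, 0)" if a: "a < n" for a
  proof -
    have "(A * W) $$ (a, 0) = (A *\<^sub>v col W 0) $ a" using a n0 A Wc by simp
    also have "A *\<^sub>v col W 0 = c \<cdot>\<^sub>v (e \<cdot>\<^sub>v v)" unfolding W0 mult_mat_vec[OF A v] ev ..
    also have "(c \<cdot>\<^sub>v (e \<cdot>\<^sub>v v)) $ a = e * (col W 0 $ a)" unfolding W0 using a v by simp
    also have "\<dots> = e * W $$ (a, 0)" using a n0 Wc by simp
    finally show ?thesis .
  qed
  have col0: "A' $$ (i, 0) = (if i = 0 then e else 0)" if i: "i < n" for i
  proof -
    have "A' = adj W * (A * W)" unfolding A'_def by (rule assoc_mult_mat[OF adj_carrier[OF Wc] A Wc])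
    hence "A' $$ (i,0) = (\<Sum>a<n. adj W $$ (i,a) * (A * W) $$ (a,0))"
      using mult_idx[OF adj_carrier[OF Wc] mult_carrier_mat[OF A Wc] i n0] by simp
    also have "\<dots> = (\<Sum>a<n. cnj (W$$(a,i)) * (e * W $$ (a,0)))"
      using i Wc by (intro sum.cong refl) (simp add: AW0)
    also have "\<dots> = e * (\<Sum>a<n. cnj (W$$(a,i)) * W $$ (a,0))"
      by (simp add: sum_distrib_left algebra_simps)
    also have "\<dots> = (if i = 0 then e else 0)" using unitary_col[OF W i n0] by simp
    finally show ?thesis .
  qed
  have ereal: "e = complex_of_real (Re e)"
  proof -
    have "A' $$ (0,0) = cnj (A' $$ (0,0))" by (rule hermitian_idx[OF hA' A'c n0 n0])
    hence "e = cnj e" using col0[OF n0] by simp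
    hence "Im e = 0" by (metis cnj.simps(2) neg_equal_zero)
    thus ?thesis by (simp add: complex_eq_iff)
  qed
  have row0: "A' $$ (0, j) = (if j = 0 then e else 0)" if j: "j < n" for j
  proof -
    have "A' $$ (0,j) = cnj (A' $$ (j,0))" by (rule hermitian_idx[OF hA' A'c n0 j])
    also have "\<dots> = (if j = 0 then e else 0)" using col0[OF j] ereal by (metis complex_cnj_complex_of_real complex_cnj_zero)
    finally show ?thesis .
  qed
  define A3 where "A3 = mat k k (\<lambda>(i,j). A' $$ (Suc i, Suc j))"
  have A3c: "A3 \<in> carrier_mat k k" by (simp add: A3_def)
  have hA3: "hermitian A3"
  proof (rule hermitianI[OF A3c])
    fix i j assume "i < k" "j < k"
    thus "A3 $$ (i,j) = cnj (A3 $$ (j,i))" unfolding A3_def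
      using hermitian_idx[OF hA' A'c, of "Suc i" "Suc j"] n_def by simp
  qed
  obtain U3 d3 where U3: "unitary k U3" and A3sp: "A3 = sp k U3 d3"
    using Suc.IH[OF A3c hA3] by blast
  define V where "V = mat n n (\<lambda>(i,j). if i = 0 then (if j = 0 then 1 else 0) else if j = 0 then 0 else U3 $$ (i - 1, j - 1))"
  define dd where "dd l = (if l = 0 then Re e else d3 (l - 1))" for l
  have Vc: "V \<in> carrier_mat n n" by (simp add: V_def)
  have Vi: "V $$ (i,j) = (if i = 0 then (if j = 0 then 1 else 0) else if j = 0 then 0 else U3 $$ (i - 1, j - 1))"
    if "i < n" "j < n" for i j using that by (simp add: V_def)
  have "adj V * V = 1\<^sub>m n"
  proof (rule eq_matI)
    fix i j assume "i < dim_row (1\<^sub>m n)" "j < dim_col (1\<^sub>m n)"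
    hence ij: "i < n" "j < n" by auto
    have "(adj V * V) $$ (i,j) = (\<Sum>l<Suc k. cnj (V$$(l,i)) * V$$(l,j))"
      using ij Vc n_def by (subst mult_idx[OF adj_carrier[OF Vc] Vc ij]) (intro sum.cong, auto)
    also have "\<dots> = cnj (V$$(0,i)) * V$$(0,j) + (\<Sum>l<k. cnj (V$$(Suc l,i)) * V$$(Suc l,j))"
      by (rule sum.lessThan_Suc_shift)
    also have "\<dots> = 1\<^sub>m n $$ (i,j)"
    proof (cases i)
      case 0
      thus ?thesis using ij n_def by (simp add: Vi)
    next
      case (Suc i')
      show ?thesis
      proof (cases j)
        case 0
        thus ?thesis using ij n_def Suc by (simp add: Vi)
      next
        case (Suc j')
        have "(\<Sum>l<k. cnj (V$$(Suc l,i)) * V$$(Suc l,j)) = (\<Sum>l<k. cnj (U3$$(l,i')) * U3$$(l,j'))"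
          using ij n_def Suc \<open>i = Suc i'\<close> by (intro sum.cong refl) (simp add: Vi)
        also have "\<dots> = (if i' = j' then 1 else 0)" using unitary_col[OF U3] ij n_def Suc \<open>i = Suc i'\<close> by simp
        finally show ?thesis using ij n_def Suc \<open>i = Suc i'\<close> by (simp add: Vi)
      qed
    qed
    finally show "(adj V * V) $$ (i,j) = 1\<^sub>m n $$ (i,j)" .
  qed (use Vc in simp_all)
  hence V: "unitary n V" by (rule unitaryI[OF Vc])
  have A'sp: "A' = sp n V dd"
  proof (rule eq_matI)
    fix i j assume "i < dim_row (sp n V dd)" "j < dim_col (sp n V dd)"
    hence ij: "i < n" "j < n" by auto
    have "sp n V dd $$ (i,j) = (\<Sum>l<Suc k. V$$(i,l) * complex_of_real (dd l) * cnj (V$$(j,l)))"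
      using ij n_def by (simp add: sp_idx)
    also have "\<dots> = V$$(i,0) * complex_of_real (dd 0) * cnj (V$$(j,0)) + (\<Sum>l<k. V$$(i,Suc l) * complex_of_real (dd (Suc l)) * cnj (V$$(j,Suc l)))"
      by (rule sum.lessThan_Suc_shift)
    also have "\<dots> = A' $$ (i,j)"
    proof (cases i)
      case 0
      thus ?thesis using ij n_def row0[OF ij(2)] ereal by (simp add: Vi dd_def)
    next
      case (Suc i')
      show ?thesis
      proof (cases j)
        case 0
        thus ?thesis using ij n_def Suc col0[OF ij(1)] by (simp add: Vi dd_def)
      next
        case (Suc j')
        have "(\<Sum>l<k. V$$(i,Suc l) * complex_of_real (dd (Suc l)) * cnj (V$$(j,Suc l))) = (\<Sum>l<k. U3$$(i',l) * complex_of_real (d3 l) * cnj (U3$$(j',l)))"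
          using ij n_def Suc \<open>i = Suc i'\<close> by (intro sum.cong refl) (simp add: Vi dd_def)
        also have "\<dots> = A3 $$ (i',j')" using A3sp ij n_def Suc \<open>i = Suc i'\<close> by (simp add: sp_idx)
        also have "\<dots> = A' $$ (i,j)" using ij n_def Suc \<open>i = Suc i'\<close> by (simp add: A3_def)
        finally show ?thesis using ij n_def Suc \<open>i = Suc i'\<close> by (simp add: Vi)
      qed
    qed
    finally show "A' $$ (i,j) = sp n V dd $$ (i,j)" by simp
  qed (use A'c in simp_all)
  have "A = (W * adj W) * A * (W * adj W)" using W A by (simp add: unitary_def)
  also have "\<dots> = W * A' * adj W"
  proof -
    have aW: "adj W \<in> carrier_mat n n" using Wc by simp
    have X: "adj W * A \<in> carrier_mat n n" using aW A by simp
    have "(W * adj W) * A * (W * adj W) = (W * (adj W * A)) * (W * adj W)"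
      using assoc_mult_mat[OF Wc aW A] by simp
    also have "\<dots> = ((W * (adj W * A)) * W) * adj W"
      by (rule assoc_mult_mat[symmetric, OF mult_carrier_mat[OF Wc X] Wc aW])
    also have "(W * (adj W * A)) * W = W * ((adj W * A) * W)"
      by (rule assoc_mult_mat[OF Wc X Wc])
    finally show ?thesis unfolding A'_def .
  qed
  also have "\<dots> = sp n (W * V) dd" unfolding A'sp by (rule sp_conj[OF Wc Vc])
  finally have "A = sp n (W * V) dd" .
  moreover have "unitary n (W * V)" by (rule unitary_mult[OF W V])
  ultimately show ?case unfolding n_def by blast
qed




lemma sp_cong: "(\<And>l. l < n \<Longrightarrow> a l = b l) \<Longrightarrow> sp n U a = sp n U b"
  unfolding sp_def by (intro eq_matI) (auto intro!: sum.cong)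

lemma psdD: assumes "psd n A"
  shows "A \<in> carrier_mat n n" "hermitian A" "\<And>v. v \<in> carrier_vec n \<Longrightarrow> 0 \<le> Re (qf A v)"
  using assms unfolding psd_def qf_def by auto

lemma psdI: assumes "A \<in> carrier_mat n n" "hermitian A" "\<And>v. v \<in> carrier_vec n \<Longrightarrow> 0 \<le> Re (qf A v)"
  shows "psd n A"
  using assms unfolding psd_def qf_def by auto

lemma sp_qf_Re: assumes U: "U \<in> carrier_mat n n" and v: "v \<in> carrier_vec n"
  shows "Re (qf (sp n U d) v) = (\<Sum>l<n. d l * (cmod (\<Sum>j<n. cnj (U$$(j,l)) * v$j))^2)"
proof -
  have "qf (sp n U d) v = (\<Sum>l<n. complex_of_real (d l * (cmod (\<Sum>j<n. cnj (U$$(j,l)) * v$j))^2))"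
    unfolding sp_qf[OF U v]
  proof (intro sum.cong refl)
    fix l
    show "complex_of_real (d l) * (cnj (\<Sum>j<n. cnj (U$$(j,l)) * v$j) * (\<Sum>j<n. cnj (U$$(j,l)) * v$j)) =
      complex_of_real (d l * (cmod (\<Sum>j<n. cnj (U$$(j,l)) * v$j))^2)"
      by (simp only: of_real_mult complex_norm_square mult.commute[of "cnj _"])
  qed
  also have "Re \<dots> = (\<Sum>l<n. d l * (cmod (\<Sum>j<n. cnj (U$$(j,l)) * v$j))^2)"
    by (simp only: Re_sum Re_complex_of_real)
  finally show ?thesis .
qed

lemma sp_psd: assumes U: "unitary n U" and d: "\<And>l. l < n \<Longrightarrow> 0 \<le> d l"
  shows "psd n (sp n U d)"
proof (rule psdI[OF sp_carrier sp_hermitian])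
  fix v :: "complex vec" assume v: "v \<in> carrier_vec n"
  show "0 \<le> Re (qf (sp n U d) v)" unfolding sp_qf_Re[OF unitary_carrier[OF U] v]
    using d by (intro sum_nonneg mult_nonneg_nonneg) auto
qed

lemma psd_sp_nonneg: assumes U: "unitary n U" and P: "psd n (sp n U d)" and l: "l < n"
  shows "0 \<le> d l"
proof -
  have "0 \<le> Re (qf (sp n U d) (col U l))"
    using psdD(3)[OF P] l unitary_carrier[OF U] by simp
  thus ?thesis using sp_qf_col[OF U l] by simp
qed

lemma psd_add: assumes "psd n A" "psd n B" shows "psd n (A + B)"
proof (rule psdI)
  have A: "A \<in> carrier_mat n n" and B: "B \<in> carrier_mat n n" using assms psdD by auto
  show "A + B \<in> carrier_mat n n" using A B by simp
  show "hermitian (A + B)" using psdD(2)[OF assms(1)] psdD(2)[OF assms(2)] adj_add[OF A B]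
    unfolding hermitian_def by simp
  fix v :: "complex vec" assume v: "v \<in> carrier_vec n"
  show "0 \<le> Re (qf (A + B) v)" unfolding qf_add[OF A B v]
    using psdD(3)[OF assms(1) v] psdD(3)[OF assms(2) v] by simp
qed

lemma qf_real_psd: assumes "psd n A" "v \<in> carrier_vec n"
  shows "qf A v = complex_of_real (Re (qf A v))"
  using hermitian_qf_real[OF psdD(1,2)[OF assms(1)] assms(2)] .

lemma sqrt_unique:
  assumes S: "psd n S" and T: "psd n T" and ST: "S * S = T * T"
  shows "S = T"
proof -
  have Sc: "S \<in> carrier_mat n n" and Tc: "T \<in> carrier_mat n n" using S T psdD by auto
  define H where "H = S - T"
  have Hc: "H \<in> carrier_mat n n" using Tc unfolding H_def by (rule minus_carrier_mat)
  have hH: "hermitian H" using psdD(2)[OF S] psdD(2)[OF T] adj_minus[OF Sc Tc]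
    unfolding hermitian_def H_def by simp
  obtain V lam where V: "unitary n V" and Hsp: "H = sp n V lam" using spectral[OF Hc hH] by blast
  have Vc: "V \<in> carrier_mat n n" using V by (rule unitary_carrier)
  have lam0: "lam k = 0" if k: "k < n" for k
  proof -
    define v where "v = col V k"
    have v: "v \<in> carrier_vec n" using k Vc by (simp add: v_def)
    have ev: "H *\<^sub>v v = complex_of_real (lam k) \<cdot>\<^sub>v v" unfolding Hsp v_def by (rule sp_col[OF V k])
    have l1: "qf H v = complex_of_real (lam k)" unfolding Hsp v_def by (rule sp_qf_col[OF V k])
    have l2: "qf H v = qf S v - qf T v" unfolding H_def by (rule qf_minus[OF Sc Tc v])
    have q1: "qf (S * H) v = complex_of_real (lam k) * qf S v" by (rule qf_mult_eig[OF Sc Hc v ev])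
    have "adj (T * H) = H * T" using adj_mult[OF Tc Hc] psdD(2)[OF T] hH unfolding hermitian_def by simp
    hence "qf (H * T) v = cnj (qf (T * H) v)" using qf_adj[OF mult_carrier_mat[OF Tc Hc] v] by simp
    also have "qf (T * H) v = complex_of_real (lam k) * qf T v" by (rule qf_mult_eig[OF Tc Hc v ev])
    finally have q2: "qf (H * T) v = complex_of_real (lam k) * cnj (qf T v)" by simp
    have SH: "S * H = S * S - S * T" unfolding H_def by (rule mult_minus_distrib_mat[OF Sc Sc Tc])
    have HT: "H * T = S * T - T * T" unfolding H_def by (rule minus_mult_distrib_mat[OF Sc Tc Tc])
    have "qf (S * H) v + qf (H * T) v = (qf (S * S) v - qf (S * T) v) + (qf (S * T) v - qf (T * T) v)"
      unfolding SH HT using qf_minus[OF mult_carrier_mat[OF Sc Sc] mult_carrier_mat[OF Sc Tc] v]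
        qf_minus[OF mult_carrier_mat[OF Sc Tc] mult_carrier_mat[OF Tc Tc] v] by simp
    also have "\<dots> = 0" using ST by simp
    finally have "complex_of_real (lam k) * qf S v + complex_of_real (lam k) * cnj (qf T v) = 0"
      using q1 q2 by simp
    moreover have "qf S v = complex_of_real (Re (qf S v))" by (rule qf_real_psd[OF S v])
    moreover have "qf T v = complex_of_real (Re (qf T v))" by (rule qf_real_psd[OF T v])
    ultimately have "complex_of_real (lam k * (Re (qf S v) + Re (qf T v))) = 0"
      by (metis complex_cnj_complex_of_real distrib_left of_real_add of_real_mult)
    hence e1: "lam k * (Re (qf S v) + Re (qf T v)) = 0" by (simp only: of_real_eq_0_iff)
    have e2: "lam k = Re (qf S v) - Re (qf T v)" using l1 l2 by (metis Re_complex_of_real minus_complex.simps(1))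
    have "0 \<le> Re (qf S v)" "0 \<le> Re (qf T v)" using psdD(3)[OF S v] psdD(3)[OF T v] by auto
    with e1 e2 show ?thesis by auto
  qed
  have "H = sp n V (\<lambda>_. 0)" unfolding Hsp by (rule sp_cong) (use lam0 in auto)
  hence "H = 0\<^sub>m n n" by (simp add: sp_zero)
  show ?thesis
  proof (rule eq_matI)
    fix i j assume "i < dim_row T" "j < dim_col T"
    hence ij: "i < n" "j < n" using Tc by auto
    have "H $$ (i,j) = 0" using \<open>H = 0\<^sub>m n n\<close> ij by simp
    thus "S $$ (i,j) = T $$ (i,j)" unfolding H_def using ij Sc Tc by simp
  qed (use Sc Tc in auto)
qed


lemma sp_adj: "adj (sp n U d) = sp n U d"
  using sp_hermitian[of n U d] unfolding hermitian_def by simp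

lemma msqrt_sp: assumes U: "unitary n U"
  shows "msqrt n (adj (sp n U d) * sp n U d) = sp n U (\<lambda>l. \<bar>d l\<bar>)"
  unfolding msqrt_def
proof (rule the_equality)
  have "sp n U (\<lambda>l. \<bar>d l\<bar>) * sp n U (\<lambda>l. \<bar>d l\<bar>) = sp n U (\<lambda>l. \<bar>d l\<bar> * \<bar>d l\<bar>)"
    by (rule sp_mult[OF U])
  also have "\<dots> = sp n U (\<lambda>l. d l * d l)" by (simp add: abs_mult_self_eq)
  also have "\<dots> = adj (sp n U d) * sp n U d" by (simp add: sp_adj sp_mult[OF U])
  finally have e: "sp n U (\<lambda>l. \<bar>d l\<bar>) * sp n U (\<lambda>l. \<bar>d l\<bar>) = adj (sp n U d) * sp n U d" .
  have p: "psd n (sp n U (\<lambda>l. \<bar>d l\<bar>))" by (rule sp_psd[OF U]) simp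
  show "psd n (sp n U (\<lambda>l. \<bar>d l\<bar>)) \<and> sp n U (\<lambda>l. \<bar>d l\<bar>) * sp n U (\<lambda>l. \<bar>d l\<bar>) = adj (sp n U d) * sp n U d"
    using p e by simp
  fix S assume "psd n S \<and> S * S = adj (sp n U d) * sp n U d"
  thus "S = sp n U (\<lambda>l. \<bar>d l\<bar>)" using sqrt_unique[OF _ p] e by auto
qed

lemma trace_norm_sp: assumes U: "unitary n U"
  shows "trace_norm n (sp n U d) = (\<Sum>l<n. \<bar>d l\<bar>)"
  unfolding trace_norm_def msqrt_sp[OF U] sp_trace[OF U] by (simp only: Re_sum Re_complex_of_real)

lemma pos_part_sp: assumes U: "unitary n U"
  shows "pos_part n (sp n U d) = sp n U (\<lambda>l. max (d l) 0)"
  unfolding pos_part_def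
proof (rule the_equality)
  let ?X = "sp n U d" and ?P = "sp n U (\<lambda>l. max (d l) 0)"
  have PX: "?P - ?X = sp n U (\<lambda>l. max (d l) 0 - d l)" by (rule sp_minus)
  have "psd n ?P" by (rule sp_psd[OF U]) simp
  moreover have "psd n (?P - ?X)" unfolding PX by (rule sp_psd[OF U]) simp
  moreover have "?P * (?P - ?X) = 0\<^sub>m n n"
  proof -
    have "?P * (?P - ?X) = sp n U (\<lambda>l. max (d l) 0 * (max (d l) 0 - d l))" unfolding PX by (rule sp_mult[OF U])
    also have "\<dots> = sp n U (\<lambda>l. 0)" by (rule sp_cong) (simp add: max_def)
    finally show ?thesis by (simp add: sp_zero)
  qed
  ultimately show "psd n ?P \<and> psd n (?P - ?X) \<and> ?P * (?P - ?X) = 0\<^sub>m n n" by simp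
  fix P assume a: "psd n P \<and> psd n (P - ?X) \<and> P * (P - ?X) = 0\<^sub>m n n"
  define Q where "Q = P - ?X"
  have P: "psd n P" and Q: "psd n Q" and PQ: "P * Q = 0\<^sub>m n n" using a by (auto simp: Q_def)
  have Pc: "P \<in> carrier_mat n n" and Qc: "Q \<in> carrier_mat n n" using P Q psdD by auto
  have QP: "Q * P = 0\<^sub>m n n"
  proof -
    have "adj (P * Q) = Q * P" using adj_mult[OF Pc Qc] psdD(2)[OF P] psdD(2)[OF Q] unfolding hermitian_def by simp
    thus ?thesis using PQ by simp
  qed
  have Xe: "?X = P - Q"
    by (rule eq_matI) (use Pc in \<open>auto simp: Q_def\<close>)
  have S: "psd n (P + Q)" by (rule psd_add[OF P Q])
  have S0: "psd n (sp n U (\<lambda>l. \<bar>d l\<bar>))" by (rule sp_psd[OF U]) simp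
  have "(P + Q) * (P + Q) = (P * P + P * Q) + (Q * P + Q * Q)"
    unfolding add_mult_distrib_mat[OF Pc Qc add_carrier_mat[OF Qc]] mult_add_distrib_mat[OF Pc Pc Qc] mult_add_distrib_mat[OF Qc Pc Qc] ..
  also have "\<dots> = (P * P - P * Q) - (Q * P - Q * Q)"
    by (rule eq_matI) (use Pc Qc PQ QP in auto)
  also have "\<dots> = (P - Q) * (P - Q)"
    unfolding minus_mult_distrib_mat[OF Pc Qc minus_carrier_mat[OF Qc]] mult_minus_distrib_mat[OF Pc Pc Qc] mult_minus_distrib_mat[OF Qc Pc Qc] ..
  also have "\<dots> = sp n U (\<lambda>l. \<bar>d l\<bar>) * sp n U (\<lambda>l. \<bar>d l\<bar>)"
    unfolding Xe[symmetric] by (simp add: sp_mult[OF U] abs_mult_self_eq)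
  finally have "P + Q = sp n U (\<lambda>l. \<bar>d l\<bar>)" by (rule sqrt_unique[OF S S0])
  have h: "sp n U (\<lambda>l. max (d l) 0) = complex_of_real (1/2) \<cdot>\<^sub>m (sp n U (\<lambda>l. \<bar>d l\<bar>) + ?X)"
  proof -
    have "complex_of_real (1/2) \<cdot>\<^sub>m (sp n U (\<lambda>l. \<bar>d l\<bar>) + ?X) = sp n U (\<lambda>l. 1/2 * (\<bar>d l\<bar> + d l))"
      by (simp only: sp_add sp_smult)
    also have "\<dots> = ?P" by (rule sp_cong) (simp add: max_def)
    finally show ?thesis by simp
  qed
  show "P = ?P"
  proof (rule eq_matI)
    fix i j assume "i < dim_row ?P" "j < dim_col ?P"
    hence ij: "i < n" "j < n" by auto
    have "(P + Q) $$ (i,j) = sp n U (\<lambda>l. \<bar>d l\<bar>) $$ (i,j)" using \<open>P + Q = _\<close> by simp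
    hence "2 * P $$ (i,j) - ?X $$ (i,j) = sp n U (\<lambda>l. \<bar>d l\<bar>) $$ (i,j)"
      using ij Pc by (simp add: Q_def)
    hence "P $$ (i,j) * 2 = sp n U (\<lambda>l. \<bar>d l\<bar>) $$ (i,j) + ?X $$ (i,j)" by (simp add: algebra_simps)
    thus "P $$ (i,j) = ?P $$ (i,j)" unfolding h using ij by simp
  qed (use Pc in auto)
qed

lemma E0: assumes U: "unitary n U" and E: "Re (mtrace (pos_part n (sp n U d))) = 0"
  and v: "v \<in> carrier_vec n"
  shows "Re (qf (sp n U d) v) \<le> 0"
proof -
  have "(\<Sum>l<n. max (d l) 0) = 0" using E unfolding pos_part_sp[OF U] sp_trace[OF U]
    by (simp only: Re_sum Re_complex_of_real)
  hence "\<forall>l\<in>{..<n}. max (d l) 0 = 0" by (subst sum_nonneg_eq_0_iff[symmetric]) auto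
  hence "\<And>l. l < n \<Longrightarrow> d l \<le> 0" by (metis lessThan_iff max.cobounded1)
  thus ?thesis unfolding sp_qf_Re[OF unitary_carrier[OF U] v]
    by (intro sum_nonpos mult_nonpos_nonneg) auto
qed




lemma real_bound:
  fixes a b :: "nat \<Rightarrow> real" and g :: real
  assumes g: "1 \<le> g"
    and ab: "\<And>l. l < m \<Longrightarrow> a l \<le> g * b l" and ba: "\<And>l. l < m \<Longrightarrow> b l \<le> g * a l"
    and sa: "(\<Sum>l<m. a l) = 1" and sb: "(\<Sum>l<m. b l) = 1"
  shows "(\<Sum>l<m. \<bar>a l - b l\<bar>) \<le> 2 * ((g - 1) / (g + 1))"
proof -
  define pa where "pa l = (if b l < a l then a l else 0)" for l
  define pb where "pb l = (if b l < a l then b l else 0)" for l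
  have t1: "pa l \<le> g * pb l" if "l < m" for l using ab[OF that] by (simp add: pa_def pb_def)
  have t2: "b l - pb l \<le> g * (a l - pa l)" if "l < m" for l using ba[OF that] by (simp add: pa_def pb_def)
  have t3: "\<bar>a l - b l\<bar> = 2 * (pa l - pb l) - (a l - b l)" for l by (simp add: pa_def pb_def)
  have s1: "(\<Sum>l<m. pa l) \<le> g * (\<Sum>l<m. pb l)"
    unfolding sum_distrib_left by (rule sum_mono) (use t1 in auto)
  have s2: "(\<Sum>l<m. b l - pb l) \<le> g * (\<Sum>l<m. a l - pa l)"
    unfolding sum_distrib_left by (rule sum_mono) (use t2 in auto)
  hence s2': "1 - (\<Sum>l<m. pb l) \<le> g * (1 - (\<Sum>l<m. pa l))"
    using sa sb by (simp add: sum_subtractf)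
  have s3: "(\<Sum>l<m. \<bar>a l - b l\<bar>) = 2 * ((\<Sum>l<m. pa l) - (\<Sum>l<m. pb l))"
    unfolding t3 using sa sb by (simp add: sum_subtractf sum_distrib_left[symmetric])
  have "(g + 1) * ((\<Sum>l<m. pa l) - (\<Sum>l<m. pb l)) \<le> g - 1"
    using s1 s2' by (simp add: algebra_simps)
  hence "((\<Sum>l<m. pa l) - (\<Sum>l<m. pb l)) \<le> (g - 1) / (g + 1)"
    using g by (simp add: field_simps)
  hence "2 * ((\<Sum>l<m. pa l) - (\<Sum>l<m. pb l)) \<le> 2 * ((g - 1) / (g + 1))"
    by (rule mult_left_mono) simp
  thus ?thesis unfolding s3 .
qed

lemma channel_carrier: "channel n m A \<Longrightarrow> X \<in> carrier_mat n n \<Longrightarrow> A X \<in> carrier_mat m m"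
  unfolding channel_def by blast

lemma channel_add: "channel n m A \<Longrightarrow> X \<in> carrier_mat n n \<Longrightarrow> Y \<in> carrier_mat n n \<Longrightarrow> A (X + Y) = A X + A Y"
  unfolding channel_def by blast

lemma channel_smult: "channel n m A \<Longrightarrow> X \<in> carrier_mat n n \<Longrightarrow> A (c \<cdot>\<^sub>m X) = c \<cdot>\<^sub>m A X"
  unfolding channel_def by blast

lemma channel_trace: "channel n m A \<Longrightarrow> X \<in> carrier_mat n n \<Longrightarrow> mtrace (A X) = mtrace X"
  unfolding channel_def by blast

lemma channel_minus: assumes A: "channel n m A" and X: "X \<in> carrier_mat n n" and Y: "Y \<in> carrier_mat n n"
  shows "A (X - Y) = A X - A Y"
proof -
  have XY: "X - Y \<in> carrier_mat n n" using Y by (rule minus_carrier_mat)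
  have "X = (X - Y) + Y" by (rule eq_matI) (use X Y in auto)
  hence e: "A X = A (X - Y) + A Y" using channel_add[OF A XY Y] by metis
  have c1: "A (X - Y) \<in> carrier_mat m m" by (rule channel_carrier[OF A XY])
  have c2: "A Y \<in> carrier_mat m m" by (rule channel_carrier[OF A Y])
  show ?thesis unfolding e by (rule eq_matI) (use c1 c2 in auto)
qed

lemma channel_psd: assumes A: "channel n m A" and P: "psd n P"
  shows "psd m (A P)"
proof -
  have Pc: "P \<in> carrier_mat n n" using psdD(1)[OF P] .
  have APc: "A P \<in> carrier_mat m m" by (rule channel_carrier[OF A Pc])
  have h: "\<forall>k X. psd (k * n) X \<longrightarrow> psd (k * m) (ampl k n m A X)" using A unfolding channel_def by blast
  have "psd (1 * m) (ampl 1 n m A P)" using h[rule_format, of 1 P] P by simp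
  moreover have "blk n P 0 0 = P" unfolding blk_def by (rule eq_matI) (use Pc in auto)
  moreover have "ampl 1 n m A P = mat m m (\<lambda>(r, c). A (blk n P 0 0) $$ (r, c))"
    unfolding ampl_def by (rule eq_matI) auto
  ultimately have "psd m (mat m m (\<lambda>(r, c). A P $$ (r, c)))" by simp
  moreover have "mat m m (\<lambda>(r, c). A P $$ (r, c)) = A P" by (rule eq_matI) (use APc in auto)
  ultimately show ?thesis by simp
qed

lemma mtrace_minus: "X \<in> carrier_mat n n \<Longrightarrow> Y \<in> carrier_mat n n \<Longrightarrow> mtrace (X - Y) = mtrace X - mtrace Y"
  by (simp add: mtrace_def sum_subtractf)

lemma qf_smult: assumes "M \<in> carrier_mat n n" "v \<in> carrier_vec n"
  shows "qf (c \<cdot>\<^sub>m M) v = c * qf M v"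
proof -
  have "qf (c \<cdot>\<^sub>m M) v = (\<Sum>i<n. cnj (v$i) * (\<Sum>j<n. (c \<cdot>\<^sub>m M) $$ (i,j) * v$j))"
    by (rule qf_idx) (use assms in auto)
  also have "\<dots> = (\<Sum>i<n. cnj (v$i) * (\<Sum>j<n. c * (M $$ (i,j) * v$j)))"
    using assms by (intro sum.cong refl) (auto simp: carrier_matD intro!: sum.cong)
  also have "\<dots> = c * qf M v" unfolding qf_idx[OF assms]
    by (simp add: sum_distrib_left algebra_simps)
  finally show ?thesis .
qed


lemma sum_qf_cols: assumes V: "unitary n V" and M: "M \<in> carrier_mat n n"
  shows "(\<Sum>l<n. qf M (col V l)) = mtrace M"
proof -
  have "mtrace (sp n V (\<lambda>_. 1) * M) = (\<Sum>l<n. complex_of_real 1 * qf M (col V l))"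
    by (rule wtrace[OF unitary_carrier[OF V] M])
  thus ?thesis unfolding sp_one[OF V] using M by simp
qed

lemma densityD: "density n \<rho> \<Longrightarrow> psd n \<rho> \<and> mtrace \<rho> = 1"
  unfolding density_def by simp

lemma LDP_qf: assumes L: "LDP n m \<epsilon> A" and d1: "density n w1" and d2: "density n w2"
  and v: "v \<in> carrier_vec m"
  shows "Re (qf (A w1) v) \<le> exp \<epsilon> * Re (qf (A w2) v)"
proof -
  have A: "channel n m A" using L unfolding LDP_def by simp
  have E: "E_gamma m (exp \<epsilon>) (A w1) (A w2) = 0" using L d1 d2 unfolding LDP_def by simp
  have p1: "psd m (A w1)" and p2: "psd m (A w2)"
    using channel_psd[OF A] densityD[OF d1] densityD[OF d2] by auto
  have c1: "A w1 \<in> carrier_mat m m" and c2: "A w2 \<in> carrier_mat m m" using p1 p2 psdD by auto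
  define Y where "Y = A w1 - complex_of_real (exp \<epsilon>) \<cdot>\<^sub>m A w2"
  have c2': "complex_of_real (exp \<epsilon>) \<cdot>\<^sub>m A w2 \<in> carrier_mat m m" using c2 by simp
  have Yc: "Y \<in> carrier_mat m m" unfolding Y_def using c2' by (rule minus_carrier_mat)
  have hY: "hermitian Y"
  proof -
    have "adj Y = adj (A w1) - adj (complex_of_real (exp \<epsilon>) \<cdot>\<^sub>m A w2)"
      unfolding Y_def by (rule adj_minus[OF c1 c2'])
    also have "\<dots> = Y" unfolding adj_smult Y_def using psdD(2)[OF p1] psdD(2)[OF p2]
      unfolding hermitian_def by simp
    finally show ?thesis unfolding hermitian_def by simp
  qed
  obtain W y where W: "unitary m W" and Ysp: "Y = sp m W y" using spectral[OF Yc hY] by blast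
  have "Re (mtrace (pos_part m Y)) = 0" using E unfolding E_gamma_def Y_def .
  hence "Re (qf Y v) \<le> 0" unfolding Ysp by (rule E0[OF W _ v])
  moreover have "qf Y v = qf (A w1) v - complex_of_real (exp \<epsilon>) * qf (A w2) v"
    unfolding Y_def qf_minus[OF c1 c2' v] qf_smult[OF c2 v] ..
  ultimately show ?thesis by simp
qed

lemma ratio_bound:
  assumes eps: "0 \<le> \<epsilon>" and L: "LDP n m \<epsilon> A" and r: "density n \<rho>" and s: "density n \<sigma>"
  shows "trace_norm m (A \<rho> - A \<sigma>) / trace_norm n (\<rho> - \<sigma>) \<le> (exp \<epsilon> - 1) / (exp \<epsilon> + 1)"
proof -
  define g where "g = exp \<epsilon>"
  have g1: "1 \<le> g" using eps by (simp add: g_def)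
  have c0: "0 \<le> (g - 1) / (g + 1)" using g1 by simp
  have A: "channel n m A" using L unfolding LDP_def by simp
  have pr: "psd n \<rho>" and ps: "psd n \<sigma>" and tr: "mtrace \<rho> = 1" and ts: "mtrace \<sigma> = 1"
    using densityD[OF r] densityD[OF s] by auto
  have rc: "\<rho> \<in> carrier_mat n n" and sc: "\<sigma> \<in> carrier_mat n n" using pr ps psdD by auto
  define X where "X = \<rho> - \<sigma>"
  have Xc: "X \<in> carrier_mat n n" unfolding X_def using sc by (rule minus_carrier_mat)
  have hX: "hermitian X" using adj_minus[OF rc sc] psdD(2)[OF pr] psdD(2)[OF ps]
    unfolding hermitian_def X_def by simp
  obtain U d where U: "unitary n U" and Xsp: "X = sp n U d" using spectral[OF Xc hX] by blast
  have "mtrace X = 0" unfolding X_def using mtrace_minus[OF rc sc] tr ts by simp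
  hence "complex_of_real (\<Sum>l<n. d l) = 0" unfolding Xsp sp_trace[OF U] by simp
  hence sd: "(\<Sum>l<n. d l) = 0" by (simp only: of_real_eq_0_iff)
  have tnX: "trace_norm n X = (\<Sum>l<n. \<bar>d l\<bar>)" unfolding Xsp by (rule trace_norm_sp[OF U])
  have AX: "A \<rho> - A \<sigma> = A X" unfolding X_def by (rule channel_minus[OF A rc sc, symmetric])
  show ?thesis
  proof (cases "(\<Sum>l<n. \<bar>d l\<bar>) = 0")
    case True
    thus ?thesis unfolding X_def[symmetric] tnX using c0 g_def by simp
  next
    case False
    define t where "t = (\<Sum>l<n. max (d l) 0)"
    have abs_eq: "(\<Sum>l<n. \<bar>d l\<bar>) = 2 * t"
    proof -
      have "(\<Sum>l<n. \<bar>d l\<bar>) = (\<Sum>l<n. 2 * max (d l) 0 - d l)" by (intro sum.cong refl) (simp add: max_def)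
      also have "\<dots> = 2 * t - (\<Sum>l<n. d l)" by (simp add: sum_subtractf sum_distrib_left t_def)
      finally show ?thesis using sd by simp
    qed
    have tpos: "0 < t"
    proof -
      have "0 \<le> t" unfolding t_def by (intro sum_nonneg) simp
      thus ?thesis using False abs_eq by simp
    qed
    define dp where "dp l = max (d l) 0 / t" for l
    define dm where "dm l = max (- d l) 0 / t" for l
    define w1 where "w1 = sp n U dp"
    define w2 where "w2 = sp n U dm"
    have w1c: "w1 \<in> carrier_mat n n" and w2c: "w2 \<in> carrier_mat n n" by (simp_all add: w1_def w2_def)
    have dw1: "density n w1" unfolding density_def
    proof
      show "psd n w1" unfolding w1_def by (rule sp_psd[OF U]) (use tpos in \<open>simp add: dp_def\<close>)
      have "(\<Sum>l<n. dp l) = t / t" unfolding dp_def sum_divide_distrib[symmetric] t_def ..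
      thus "mtrace w1 = 1" unfolding w1_def sp_trace[OF U] using tpos by (simp flip: of_real_sum)
    qed
    have dw2: "density n w2" unfolding density_def
    proof
      show "psd n w2" unfolding w2_def by (rule sp_psd[OF U]) (use tpos in \<open>simp add: dm_def\<close>)
      have "(\<Sum>l<n. dm l) = (\<Sum>l<n. max (d l) 0 - d l) / t" unfolding dm_def
        by (simp add: sum_divide_distrib) (intro sum.cong refl, simp add: max_def)
      also have "\<dots> = t / t" using sd by (simp add: sum_subtractf t_def)
      finally show "mtrace w2 = 1" unfolding w2_def sp_trace[OF U] using tpos by (simp flip: of_real_sum)
    qed
    have Xw: "X = complex_of_real t \<cdot>\<^sub>m (w1 - w2)"
    proof -
      have "complex_of_real t \<cdot>\<^sub>m (w1 - w2) = sp n U (\<lambda>l. t * (dp l - dm l))"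
        unfolding w1_def w2_def sp_minus sp_smult ..
      also have "\<dots> = sp n U d" by (rule sp_cong) (use tpos in \<open>simp add: dp_def dm_def max_def field_simps\<close>)
      finally show ?thesis unfolding Xsp by simp
    qed
    have p1: "psd m (A w1)" and p2: "psd m (A w2)"
      using channel_psd[OF A] densityD[OF dw1] densityD[OF dw2] by auto
    have c1: "A w1 \<in> carrier_mat m m" and c2: "A w2 \<in> carrier_mat m m" using p1 p2 psdD by auto
    define Z where "Z = A w1 - A w2"
    have Zc: "Z \<in> carrier_mat m m" unfolding Z_def using c2 by (rule minus_carrier_mat)
    have hZ: "hermitian Z" using adj_minus[OF c1 c2] psdD(2)[OF p1] psdD(2)[OF p2]
      unfolding hermitian_def Z_def by simp
    obtain V z where V: "unitary m V" and Zsp: "Z = sp m V z" using spectral[OF Zc hZ] by blast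
    have Vc: "V \<in> carrier_mat m m" using V by (rule unitary_carrier)
    have "A X = complex_of_real t \<cdot>\<^sub>m Z"
      unfolding Xw Z_def channel_smult[OF A minus_carrier_mat[OF w2c]] channel_minus[OF A w1c w2c] ..
    also have "\<dots> = sp m V (\<lambda>l. t * z l)" unfolding Zsp by (rule sp_smult)
    finally have AXsp: "A X = sp m V (\<lambda>l. t * z l)" .
    have tnAX: "trace_norm m (A X) = t * (\<Sum>l<m. \<bar>z l\<bar>)"
      unfolding AXsp trace_norm_sp[OF V] using tpos by (simp add: abs_mult sum_distrib_left)
    define a where "a l = Re (qf (A w1) (col V l))" for l
    define b where "b l = Re (qf (A w2) (col V l))" for l
    have zab: "z l = a l - b l" if l: "l < m" for l
    proof -
      have cl: "col V l \<in> carrier_vec m" using l Vc by simp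
      have "complex_of_real (z l) = qf Z (col V l)" unfolding Zsp by (rule sp_qf_col[OF V l, symmetric])
      also have "\<dots> = qf (A w1) (col V l) - qf (A w2) (col V l)" unfolding Z_def by (rule qf_minus[OF c1 c2 cl])
      finally show ?thesis unfolding a_def b_def by (metis Re_complex_of_real minus_complex.simps(1))
    qed
    have sa: "(\<Sum>l<m. a l) = 1"
    proof -
      have "(\<Sum>l<m. a l) = Re (\<Sum>l<m. qf (A w1) (col V l))" unfolding a_def by (simp add: Re_sum)
      also have "\<dots> = Re (mtrace (A w1))" unfolding sum_qf_cols[OF V c1] ..
      also have "\<dots> = 1" using channel_trace[OF A w1c] densityD[OF dw1] by simp
      finally show ?thesis .
    qed
    have sb: "(\<Sum>l<m. b l) = 1"
    proof -
      have "(\<Sum>l<m. b l) = Re (\<Sum>l<m. qf (A w2) (col V l))" unfolding b_def by (simp add: Re_sum)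
      also have "\<dots> = Re (mtrace (A w2))" unfolding sum_qf_cols[OF V c2] ..
      also have "\<dots> = 1" using channel_trace[OF A w2c] densityD[OF dw2] by simp
      finally show ?thesis .
    qed
    have ab: "a l \<le> g * b l" if "l < m" for l
      unfolding a_def b_def g_def by (rule LDP_qf[OF L dw1 dw2]) (use that Vc in simp)
    have ba: "b l \<le> g * a l" if "l < m" for l
      unfolding a_def b_def g_def by (rule LDP_qf[OF L dw2 dw1]) (use that Vc in simp)
    have "(\<Sum>l<m. \<bar>z l\<bar>) = (\<Sum>l<m. \<bar>a l - b l\<bar>)" by (intro sum.cong refl) (simp add: zab)
    also have "\<dots> \<le> 2 * ((g - 1) / (g + 1))" by (rule real_bound[OF g1 ab ba sa sb])
    finally have zb: "(\<Sum>l<m. \<bar>z l\<bar>) \<le> 2 * ((g - 1) / (g + 1))" .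
    have "trace_norm m (A \<rho> - A \<sigma>) / trace_norm n (\<rho> - \<sigma>) = t * (\<Sum>l<m. \<bar>z l\<bar>) / (2 * t)"
      unfolding AX X_def[symmetric] tnAX tnX abs_eq ..
    also have "\<dots> = (\<Sum>l<m. \<bar>z l\<bar>) / 2" using tpos by simp
    also have "\<dots> \<le> (g - 1) / (g + 1)" using zb by (simp add: mult.commute)
    finally show ?thesis unfolding g_def .
  qed
qed

theorem mainTheorem12:
  fixes n m :: nat and \<epsilon> :: real and A :: "complex mat \<Rightarrow> complex mat"
  assumes "0 \<le> \<epsilon>" and "LDP n m \<epsilon> A"
  shows "eta_tr n m A \<le> ereal ((exp \<epsilon> - 1) / (exp \<epsilon> + 1))"
  unfolding eta_tr_def
proof (rule SUP_least)
  fix p assume "p \<in> {(\<rho>, \<sigma>). density n \<rho> \<and> density n \<sigma> \<and> \<rho> \<noteq> \<sigma>}"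
  then obtain \<rho> \<sigma> where p: "p = (\<rho>, \<sigma>)" and r: "density n \<rho>" and s: "density n \<sigma>" by auto
  show "ereal (trace_norm m (A (fst p) - A (snd p)) / trace_norm n (fst p - snd p)) \<le> ereal ((exp \<epsilon> - 1) / (exp \<epsilon> + 1))"
    unfolding p using ratio_bound[OF assms r s] by simp
qed


end
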